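(* Let $f$ be a real function on $\mathbb{T}^\kappa$ and $g$ a real function on $\mathbb{T}$. Fix $0<\alpha\le1$ and put $\gamma=1-\alpha$. Then $$\int_a^b f(t)\,({}_a\Delta_h^{\alpha}g)(t)\,\Delta t=h^\gamma f(\rho(b))g(b)-h^\gamma f(a)g(a)+\int_a^{\rho(b)}({}_h\Delta_{\rho(b)}^{\alpha}f)(t)\,g(\sigma(t))\,\Delta t$$ $$\quad+\frac{\gamma}{\Gamma(\gamma+1)}g(a)\Bigl(\int_a^b(t+\gamma h-a)_h^{(\gamma-1)}f(t)\Delta t-\int_{\sigma(a)}^{b}(t+\gamma h-\sigma(a))_h^{(\gamma-1)}f(t)\Delta t\Bigr).$$
   Context: Let $a\in\mathbb{R}$, $h>0$, $b=a+kh$ with $k\in\mathbb{N}$, $k\ge2$, $\mathbb{T}=\{a,a+h,\dots,b\}$, $\mathbb{T}^\kappa=\mathbb{T}\setminus\{b\}$, $\sigma(t)=t+h$, $\rho(t)=t-h$, $G^\Delta(t)=(G(t+h)-G(t))/h$. For $c\le d$, $\int_c^dG(s)\Delta s:=h\sum_{j=0}^{(d-c)/h-1}G(c+jh)$. $h$-factorial: $x_h^{(y)}:=h^y\Gamma(\frac{x}{h}+1)/\Gamma(\frac{x}{h}+1-y)$ (division at a pole yields zero). For $\nu\ge0$, $c\in\mathbb{T}$, $G$ defined on $\{s\in\mathbb{T}:s\le c\}$ and $t\in\mathbb{T}$, $t\le c$: $({}_a\Delta_h^{-\nu}G)(t+\nu h):=h^\nu G(t)+\frac{\nu}{\Gamma(\nu+1)}\int_a^t(t+\nu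 h-\sigma(s))_h^{(\nu-1)}G(s)\Delta s$, $({}_h\Delta_c^{-\nu}G)(t-\nu h):=h^\nu G(t)+\frac{\nu}{\Gamma(\nu+1)}\int_{\sigma(t)}^{\sigma(c)}(s+\nu h-\sigma(t))_h^{(\nu-1)}G(s)\Delta s$. For $0<\alpha\le1$, $\gamma=1-\alpha$, $t\in\mathbb{T}$, $t<c$: left fractional difference $({}_a\Delta_h^{\alpha}G)(t):=[\tau\mapsto({}_a\Delta_h^{-\gamma}G)(\tau+\gamma h)]^\Delta(t)$; right fractional difference with endpoint $c$: $({}_h\Delta_c^{\alpha}G)(t):=-[\tau\mapsto({}_h\Delta_c^{-\gamma}G)(\tau-\gamma h)]^\Delta(t)$. *)

theory Defs
  imports "HOL-Analysis.Analysis"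
begin

text \<open>Time scale T = {a, a+h, ..., b}; sigma t = t + h, rho t = t - h.
  Functions on T are modelled as total functions real => real; only their
  values on the relevant grid points are ever used.\<close>

definition dsigma :: "real \<Rightarrow> real \<Rightarrow> real" where
  "dsigma h t = t + h"

definition drho :: "real \<Rightarrow> real \<Rightarrow> real" where
  "drho h t = t - h"

definition delta_int :: "real \<Rightarrow> real \<Rightarrow> real \<Rightarrow> (real \<Rightarrow> real) \<Rightarrow> real" where
  "delta_int h c d G = h * (\<Sum>j<nat (round ((d - c) / h)). G (c + real j * h))"

definition delta_deriv :: "real \<Rightarrow> (real \<Rightarrow> real) \<Rightarrow> real \<Rightarrow> real" where
  "delta_deriv h G t = (G (t + h) - G t) / h"

text \<open>h-factorial x_h^(y) = h^y Gamma(x/h+1) / Gamma(x/h+1-y); division at a pole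
  of the denominator yields zero, which is exactly multiplication by rGamma.\<close>
definition hfact :: "real \<Rightarrow> real \<Rightarrow> real \<Rightarrow> real" where
  "hfact h x y = h powr y * Gamma (x / h + 1) * rGamma (x / h + 1 - y)"

text \<open>left_frac_sum a h nu G t = (a Delta_h^{-nu} G)(t + nu h).\<close>
definition left_frac_sum :: "real \<Rightarrow> real \<Rightarrow> real \<Rightarrow> (real \<Rightarrow> real) \<Rightarrow> real \<Rightarrow> real" where
  "left_frac_sum a h \<nu> G t = h powr \<nu> * G t
     + \<nu> / Gamma (\<nu> + 1) * delta_int h a t (\<lambda>s. hfact h (t + \<nu> * h - dsigma h s) (\<nu> - 1) * G s)"

text \<open>right_frac_sum c h nu G t = (h Delta_c^{-nu} G)(t - nu h).\<close>
definition right_frac_sum :: "real \<Rightarrow> real \<Rightarrow> real \<Rightarrow> (real \<Rightarrow> real) \<Rightarrow> real \<Rightarrow> real" where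
  "right_frac_sum c h \<nu> G t = h powr \<nu> * G t
     + \<nu> / Gamma (\<nu> + 1) * delta_int h (dsigma h t) (dsigma h c) (\<lambda>s. hfact h (s + \<nu> * h - dsigma h t) (\<nu> - 1) * G s)"

definition left_frac_diff :: "real \<Rightarrow> real \<Rightarrow> real \<Rightarrow> (real \<Rightarrow> real) \<Rightarrow> real \<Rightarrow> real" where
  "left_frac_diff a h \<alpha> G t = delta_deriv h (left_frac_sum a h (1 - \<alpha>) G) t"

definition right_frac_diff :: "real \<Rightarrow> real \<Rightarrow> real \<Rightarrow> (real \<Rightarrow> real) \<Rightarrow> real \<Rightarrow> real" where
  "right_frac_diff c h \<alpha> G t = - delta_deriv h (right_frac_sum c h (1 - \<alpha>) G) t"

end

theory Submission imports Defs begin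

definition Sf :: "(nat \<Rightarrow> real) \<Rightarrow> (nat \<Rightarrow> real) \<Rightarrow> nat \<Rightarrow> real" where
  "Sf W G j = (\<Sum>i<j. W (j - i - 1) * G i)"
definition Tf :: "(nat \<Rightarrow> real) \<Rightarrow> (nat \<Rightarrow> real) \<Rightarrow> nat \<Rightarrow> nat \<Rightarrow> real" where
  "Tf W F m j = (\<Sum>l<m - j. W l * F (Suc j + l))"

lemma Tf_step: "j \<le> m \<Longrightarrow> Tf W F (Suc m) j = Tf W F m j + W (m - j) * F (Suc m)"
proof -
  assume "j \<le> m"
  then have e: "Suc m - j = Suc (m - j)" by simp
  show ?thesis unfolding Tf_def e using \<open>j \<le> m\<close> by simp
qed

lemma Tf_0: "Tf W F m m = 0" by (simp add: Tf_def)

lemma S_diff: "Sf W G (Suc (Suc m)) - Sf W G (Suc m) =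
   (W (Suc m) - W m) * G 0 + (\<Sum>j<m. (W (m-j) - W (m - Suc j)) * G (Suc j)) + W 0 * G (Suc m)"
proof -
  have 1: "Sf W G (Suc (Suc m)) = W (Suc m) * G 0 + (\<Sum>j<m. W (m-j) * G (Suc j)) + W 0 * G (Suc m)"
    unfolding Sf_def by (subst sum.lessThan_Suc_shift, subst sum.lessThan_Suc) simp
  have 2: "Sf W G (Suc m) = W m * G 0 + (\<Sum>j<m. W (m - Suc j) * G (Suc j))"
    unfolding Sf_def by (simp only: sum.lessThan_Suc_shift) simp
  show ?thesis unfolding 1 2 by (simp add: algebra_simps sum_subtractf)
qed

lemma Dpart:
  "(\<Sum>j<Suc m. F j * (Sf W G (Suc j) - Sf W G j))
   = - (\<Sum>j<m. (Tf W F m (Suc j) - Tf W F m j) * G (Suc j))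
     + G 0 * ((\<Sum>j<Suc m. W j * F j) - (\<Sum>j<m. W j * F (Suc j)))"
proof (induction m)
  case 0
  then show ?case by (simp add: Sf_def)
next
  case (Suc m)
  have T: "(\<Sum>j<Suc m. (Tf W F (Suc m) (Suc j) - Tf W F (Suc m) j) * G (Suc j))
     = (\<Sum>j<m. (Tf W F m (Suc j) - Tf W F m j) * G (Suc j))
       + (\<Sum>j<m. (W (m - Suc j) - W (m - j)) * F (Suc m) * G (Suc j))
       - W 0 * F (Suc m) * G (Suc m)"
  proof -
    have "(\<Sum>j<m. (Tf W F (Suc m) (Suc j) - Tf W F (Suc m) j) * G (Suc j))
       = (\<Sum>j<m. (Tf W F m (Suc j) - Tf W F m j) * G (Suc j)
                  + (W (m - Suc j) - W (m - j)) * F (Suc m) * G (Suc j))"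
      by (rule sum.cong) (auto simp: Tf_step algebra_simps)
    moreover have "Tf W F (Suc m) (Suc m) - Tf W F (Suc m) m = - W 0 * F (Suc m)"
      by (simp add: Tf_step Tf_0)
    moreover have "(\<Sum>j<m. (Tf W F m (Suc j) - Tf W F m j) * G (Suc j)
                  + (W (m - Suc j) - W (m - j)) * F (Suc m) * G (Suc j)) =
       (\<Sum>j<m. (Tf W F m (Suc j) - Tf W F m j) * G (Suc j))
       + (\<Sum>j<m. (W (m - Suc j) - W (m - j)) * F (Suc m) * G (Suc j))"
      by (rule sum.distrib)
    ultimately show ?thesis by (simp add: Tf_0 Tf_step algebra_simps)
  qed
  have "(\<Sum>j<Suc (Suc m). F j * (Sf W G (Suc j) - Sf W G j))
      = (\<Sum>j<Suc m. F j * (Sf W G (Suc j) - Sf W G j)) + F (Suc m) * (Sf W G (Suc (Suc m)) - Sf W G (Suc m))"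
    by simp
  also have "\<dots> = - (\<Sum>j<Suc m. (Tf W F (Suc m) (Suc j) - Tf W F (Suc m) j) * G (Suc j))
     + G 0 * ((\<Sum>j<Suc (Suc m). W j * F j) - (\<Sum>j<Suc m. W j * F (Suc j)))"
    unfolding Suc.IH T S_diff
    by (simp add: algebra_simps sum_distrib_left sum_distrib_right sum_subtractf)
  finally show ?case .
qed

lemma Ppart:
  "(\<Sum>j<Suc m. F j * (G (Suc j) - G j :: real))
   = F m * G (Suc m) - F 0 * G 0 - (\<Sum>j<m. (F (Suc j) - F j) * G (Suc j))"
  by (induction m) (simp_all add: algebra_simps)


lemma dint: "h > 0 \<Longrightarrow> d = c + real m * h \<Longrightarrow> delta_int h c d G = h * (\<Sum>j<m. G (c + real j * h))"
  unfolding delta_int_def by simp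

theorem mainTheorem10:
  fixes a h b \<alpha> \<gamma> :: real and k :: nat and f g :: "real \<Rightarrow> real"
  assumes hpos: "h > 0" and k2: "k \<ge> 2" and bdef: "b = a + real k * h"
    and alpha: "0 < \<alpha>" "\<alpha> \<le> 1" and gdef: "\<gamma> = 1 - \<alpha>"
  shows "delta_int h a b (\<lambda>t. f t * left_frac_diff a h \<alpha> g t)
    = h powr \<gamma> * f (drho h b) * g b - h powr \<gamma> * f a * g a
      + delta_int h a (drho h b) (\<lambda>t. right_frac_diff (drho h b) h \<alpha> f t * g (dsigma h t))
      + \<gamma> / Gamma (\<gamma> + 1) * g a *
          (delta_int h a b (\<lambda>t. hfact h (t + \<gamma> * h - a) (\<gamma> - 1) * f t)
           - delta_int h (dsigma h a) b (\<lambda>t. hfact h (t + \<gamma> * h - dsigma h a) (\<gamma> - 1) * f t))"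
proof -
  obtain m where km: "k = Suc m" using k2 by (cases k) auto
  define F where "F j = f (a + real j * h)" for j
  define G where "G j = g (a + real j * h)" for j
  define W where "W n = hfact h (real n * h + \<gamma> * h) (\<gamma> - 1)" for n
  define p where "p = h powr \<gamma>"
  define C where "C = \<gamma> / Gamma (\<gamma> + 1)"
  have ga: "1 - \<alpha> = \<gamma>" using gdef by simp
  have hne: "h \<noteq> 0" using hpos by simp
  have Lj: "left_frac_sum a h \<gamma> g (a + real j * h) = p * G j + C * (h * Sf W G j)" for j
  proof -
    have "delta_int h a (a + real j * h) (\<lambda>s. hfact h (a + real j * h + \<gamma> * h - dsigma h s) (\<gamma> - 1) * g s)
       = h * (\<Sum>i<j. hfact h (a + real j * h + \<gamma> * h - dsigma h (a + real i * h)) (\<gamma> - 1) * g (a + real i * h))"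
      by (rule dint[OF hpos]) simp
    also have "\<dots> = h * Sf W G j" unfolding Sf_def
    proof (intro arg_cong[where f="\<lambda>x. h * x"] sum.cong refl)
      fix i assume "i \<in> {..<j}"
      then have e: "a + real j * h + \<gamma> * h - dsigma h (a + real i * h) = real (j - i - 1) * h + \<gamma> * h"
        by (auto simp: dsigma_def of_nat_diff algebra_simps)
      show "hfact h (a + real j * h + \<gamma> * h - dsigma h (a + real i * h)) (\<gamma> - 1) * g (a + real i * h) = W (j - i - 1) * G i"
        by (simp only: W_def G_def e)
    qed
    finally show ?thesis unfolding left_frac_sum_def p_def C_def G_def by simp
  qed
  have bb: "dsigma h (drho h b) = b" by (simp add: dsigma_def drho_def)
  have Rj: "right_frac_sum (drho h b) h \<gamma> f (a + real j * h) = p * F j + C * (h * Tf W F m j)" if jm: "j \<le> m" for j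
  proof -
    have "delta_int h (dsigma h (a + real j * h)) (dsigma h (drho h b)) (\<lambda>s. hfact h (s + \<gamma> * h - dsigma h (a + real j * h)) (\<gamma> - 1) * f s)
       = h * (\<Sum>l<m - j. hfact h (dsigma h (a + real j * h) + real l * h + \<gamma> * h - dsigma h (a + real j * h)) (\<gamma> - 1) * f (dsigma h (a + real j * h) + real l * h))"
      by (rule dint[OF hpos]) (use jm in \<open>simp add: bb bdef km dsigma_def drho_def of_nat_diff algebra_simps\<close>)
    also have "\<dots> = h * Tf W F m j" unfolding Tf_def
    proof (intro arg_cong[where f="\<lambda>x. h * x"] sum.cong refl)
      fix l assume "l \<in> {..<m - j}"
      have e: "dsigma h (a + real j * h) + real l * h = a + real (Suc j + l) * h"
        by (simp add: dsigma_def algebra_simps)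
      have e2: "a + real (Suc j + l) * h + \<gamma> * h - dsigma h (a + real j * h) = real l * h + \<gamma> * h"
        by (simp add: dsigma_def algebra_simps)
      show "hfact h (dsigma h (a + real j * h) + real l * h + \<gamma> * h - dsigma h (a + real j * h)) (\<gamma> - 1) * f (dsigma h (a + real j * h) + real l * h) = W l * F (Suc j + l)"
        by (simp only: W_def F_def e e2)
    qed
    finally show ?thesis unfolding right_frac_sum_def p_def C_def F_def by (simp add: drho_def)
  qed
  have suc: "a + real j * h + h = a + real (Suc j) * h" for j by (simp add: algebra_simps)
  have LHS: "delta_int h a b (\<lambda>t. f t * left_frac_diff a h \<alpha> g t)
     = p * (\<Sum>j<Suc m. F j * (G (Suc j) - G j)) + C * h * (\<Sum>j<Suc m. F j * (Sf W G (Suc j) - Sf W G j))"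
  proof -
    have "delta_int h a b (\<lambda>t. f t * left_frac_diff a h \<alpha> g t)
       = h * (\<Sum>j<Suc m. f (a + real j * h) * left_frac_diff a h \<alpha> g (a + real j * h))"
      by (rule dint[OF hpos]) (simp add: bdef km)
    also have "\<dots> = h * (\<Sum>j<Suc m. F j * (((p * G (Suc j) + C * (h * Sf W G (Suc j))) - (p * G j + C * (h * Sf W G j))) / h))"
      unfolding left_frac_diff_def delta_deriv_def ga suc Lj F_def by simp
    also have "\<dots> = (\<Sum>j<Suc m. p * (F j * (G (Suc j) - G j)) + C * h * (F j * (Sf W G (Suc j) - Sf W G j)))"
      unfolding sum_distrib_left using hne by (intro sum.cong refl) (simp add: field_simps)
    finally show ?thesis by (simp only: sum.distrib sum_distrib_left)
  qed
  have RS: "delta_int h a (drho h b) (\<lambda>t. right_frac_diff (drho h b) h \<alpha> f t * g (dsigma h t))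
     = - (p * (\<Sum>j<m. (F (Suc j) - F j) * G (Suc j)) + C * h * (\<Sum>j<m. (Tf W F m (Suc j) - Tf W F m j) * G (Suc j)))"
  proof -
    have "delta_int h a (drho h b) (\<lambda>t. right_frac_diff (drho h b) h \<alpha> f t * g (dsigma h t))
       = h * (\<Sum>j<m. right_frac_diff (drho h b) h \<alpha> f (a + real j * h) * g (dsigma h (a + real j * h)))"
      by (rule dint[OF hpos]) (simp add: bdef km drho_def algebra_simps)
    also have "\<dots> = h * (\<Sum>j<m. - (((p * F (Suc j) + C * (h * Tf W F m (Suc j))) - (p * F j + C * (h * Tf W F m j))) / h) * G (Suc j))"
    proof (intro arg_cong[where f="\<lambda>x. h * x"] sum.cong refl)
      fix j assume "j \<in> {..<m}"
      then have j1: "j \<le> m" and j2: "Suc j \<le> m" by auto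
      then show "right_frac_diff (drho h b) h \<alpha> f (a + real j * h) * g (dsigma h (a + real j * h)) =
          - (((p * F (Suc j) + C * (h * Tf W F m (Suc j))) - (p * F j + C * (h * Tf W F m j))) / h) * G (Suc j)"
        unfolding right_frac_diff_def delta_deriv_def ga suc unfolding Rj[OF j1] Rj[OF j2]
        by (simp add: G_def dsigma_def suc)
    qed
    also have "\<dots> = (\<Sum>j<m. - (p * ((F (Suc j) - F j) * G (Suc j)) + C * h * ((Tf W F m (Suc j) - Tf W F m j) * G (Suc j))))"
      unfolding sum_distrib_left using hne by (intro sum.cong refl) (simp add: field_simps)
    finally show ?thesis by (simp only: sum.distrib sum_distrib_left sum_negf)
  qed
  have I1: "delta_int h a b (\<lambda>t. hfact h (t + \<gamma> * h - a) (\<gamma> - 1) * f t) = h * (\<Sum>j<Suc m. W j * F j)"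
    by (subst dint[OF hpos, where m="Suc m"]) (simp_all add: bdef km W_def F_def)
  have I2: "delta_int h (dsigma h a) b (\<lambda>t. hfact h (t + \<gamma> * h - dsigma h a) (\<gamma> - 1) * f t) = h * (\<Sum>j<m. W j * F (Suc j))"
  proof (subst dint[OF hpos, where m="m"])
    show "b = dsigma h a + real m * h" by (simp add: bdef km dsigma_def algebra_simps)
    have "dsigma h a + real j * h = a + real (Suc j) * h" for j by (simp add: dsigma_def algebra_simps)
    moreover have "dsigma h a + real j * h + \<gamma> * h - dsigma h a = real j * h + \<gamma> * h" for j by simp
    ultimately show "h * (\<Sum>j<m. hfact h (dsigma h a + real j * h + \<gamma> * h - dsigma h a) (\<gamma> - 1) * f (dsigma h a + real j * h)) = h * (\<Sum>j<m. W j * F (Suc j))"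
      by (simp only: W_def F_def)
  qed
  have e1: "f (drho h b) = F m" "g b = G (Suc m)" "f a = F 0" "g a = G 0"
    by (simp_all add: F_def G_def drho_def bdef km algebra_simps)
  show ?thesis
    unfolding LHS RS I1 I2 e1 Dpart Ppart[where F=F and G=G] p_def[symmetric] C_def[symmetric]
    by (simp add: algebra_simps)
qed

end
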